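(* Let $b'>b>1$. For every instance, the partially naive (pessimistic) agent with true bias $b$ and believed bias $b'$ satisfies $C_p(s)\le b'\cdot C_o(s)$; that is, its cost ratio is at most $b'$.
   Context: An instance is a finite directed acyclic graph $G=(V,E)$ with nonnegative edge costs $c(u,v)$, start node $s$ and target node $t$, where $t$ is the unique node with no outgoing edges; $C_o(u)$ is the minimum cost of a $u$–$t$ path. The sophisticated agent with bias $b'$ is defined by $C_s'(t)=0$ and, for $u\ne t$, $S_s'(u)\in\arg\min_{v:(u,v)\in E}(b'\,c(u,v)+C_s'(v))$, $C_s'(u)=c(u,S_s'(u))+C_s'(S_s'(u))$. The partially naive agent with true bias $b$ and believed bias $b'$: $C_p(t)=0$, and for $u\neq t$, $S_p(u)\in\arg\min_{v:(u,v)\in E}(b\,c(u,v)+C_s'(v))$, $C_p(u)=c(u,S_p(u))+C_p(S_p(u))$; its incurred cost is $C_p(s)$, and its cost ratio is $C_p(s)/C_o(s)$. *)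

theory Defs
  imports Main Complex_Main
begin

definition dag_instance :: "'a set \<Rightarrow> ('a \<times> 'a) set \<Rightarrow> ('a \<Rightarrow> 'a \<Rightarrow> real) \<Rightarrow> 'a \<Rightarrow> 'a \<Rightarrow> bool" where
  "dag_instance V E c s t \<longleftrightarrow>
     finite V \<and> E \<subseteq> V \<times> V \<and> acyclic E \<and>
     (\<forall>(u,v)\<in>E. 0 \<le> c u v) \<and> s \<in> V \<and> t \<in> V \<and>
     (\<forall>u\<in>V. (\<nexists>v. (u,v) \<in> E) \<longleftrightarrow> u = t)"

definition is_path :: "('a \<times> 'a) set \<Rightarrow> 'a \<Rightarrow> 'a \<Rightarrow> 'a list \<Rightarrow> bool" where
  "is_path E u v xs \<longleftrightarrow> xs \<noteq> [] \<and> hd xs = u \<and> last xs = v \<and>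
     (\<forall>i. Suc i < length xs \<longrightarrow> (xs ! i, xs ! Suc i) \<in> E)"

definition path_cost :: "('a \<Rightarrow> 'a \<Rightarrow> real) \<Rightarrow> 'a list \<Rightarrow> real" where
  "path_cost c xs = (\<Sum>i<length xs - 1. c (xs ! i) (xs ! Suc i))"

text \<open>Minimum cost of a u-t path (the set of such paths is finite in a finite DAG).\<close>
definition opt_cost :: "('a \<times> 'a) set \<Rightarrow> ('a \<Rightarrow> 'a \<Rightarrow> real) \<Rightarrow> 'a \<Rightarrow> 'a \<Rightarrow> real" where
  "opt_cost E c t u = Min {path_cost c xs | xs. is_path E u t xs}"

text \<open>(Ss, Cs) is a valid sophisticated agent with bias bb (any tie-breaking).\<close>
definition soph_agent :: "'a set \<Rightarrow> ('a \<times> 'a) set \<Rightarrow> ('a \<Rightarrow> 'a \<Rightarrow> real) \<Rightarrow> 'a \<Rightarrow> real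
    \<Rightarrow> ('a \<Rightarrow> 'a) \<Rightarrow> ('a \<Rightarrow> real) \<Rightarrow> bool" where
  "soph_agent V E c t bb Ss Cs \<longleftrightarrow>
     Cs t = 0 \<and>
     (\<forall>u \<in> V - {t}. (u, Ss u) \<in> E \<and>
        (\<forall>v. (u, v) \<in> E \<longrightarrow> bb * c u (Ss u) + Cs (Ss u) \<le> bb * c u v + Cs v) \<and>
        Cs u = c u (Ss u) + Cs (Ss u))"

text \<open>(Sp, Cp) is a valid partially naive agent with true bias b, planning with
  the sophisticated costs Cs' for believed bias b'.\<close>
definition pnaive_agent :: "'a set \<Rightarrow> ('a \<times> 'a) set \<Rightarrow> ('a \<Rightarrow> 'a \<Rightarrow> real) \<Rightarrow> 'a \<Rightarrow> real
    \<Rightarrow> ('a \<Rightarrow> real) \<Rightarrow> ('a \<Rightarrow> 'a) \<Rightarrow> ('a \<Rightarrow> real) \<Rightarrow> bool" where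
  "pnaive_agent V E c t b Cs' Sp Cp \<longleftrightarrow>
     Cp t = 0 \<and>
     (\<forall>u \<in> V - {t}. (u, Sp u) \<in> E \<and>
        (\<forall>v. (u, v) \<in> E \<longrightarrow> b * c u (Sp u) + Cs' (Sp u) \<le> b * c u v + Cs' v) \<and>
        Cp u = c u (Sp u) + Cp (Sp u))"

end

theory Submission
  imports Defs
begin

lemma path_cons2:
  assumes "is_path E u t (u' # v # ys)"
  shows "u' = u \<and> (u, v) \<in> E \<and> is_path E v t (v # ys)"
proof -
  have "(u', v) \<in> E" using assms unfolding is_path_def by (metis length_Cons nth_Cons_0 nth_Cons_Suc zero_less_Suc Suc_less_eq)
  moreover have "\<forall>i. Suc i < length (v#ys) \<longrightarrow> ((v#ys) ! i, (v#ys) ! Suc i) \<in> E"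
  proof (intro allI impI)
    fix i assume "Suc i < length (v#ys)"
    then have "Suc (Suc i) < length (u'#v#ys)" by simp
    then have "((u'#v#ys) ! Suc i, (u'#v#ys) ! Suc (Suc i)) \<in> E" using assms unfolding is_path_def by blast
    then show "((v#ys) ! i, (v#ys) ! Suc i) \<in> E" by simp
  qed
  ultimately show ?thesis using assms unfolding is_path_def by auto
qed

lemma path_cost_cons2: "path_cost c (u # v # ys) = c u v + path_cost c (v # ys)"
  unfolding path_cost_def by (simp add: sum.lessThan_Suc_shift del: sum.lessThan_Suc)

lemma path_single: "is_path E u t [x] \<Longrightarrow> u = t \<and> x = t"
  unfolding is_path_def by auto

lemma path_trancl:
  assumes "\<forall>i. Suc i < length xs \<longrightarrow> (xs ! i, xs ! Suc i) \<in> E"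
  shows "i < j \<Longrightarrow> j < length xs \<Longrightarrow> (xs ! i, xs ! j) \<in> E\<^sup>+"
proof (induction j)
  case 0 then show ?case by simp
next
  case (Suc j)
  have e: "(xs ! j, xs ! Suc j) \<in> E" using assms Suc.prems by blast
  show ?case
  proof (cases "i = j")
    case True then show ?thesis using e by auto
  next
    case False
    then have "(xs ! i, xs ! j) \<in> E\<^sup>+" using Suc by auto
    then show ?thesis using e by (meson trancl.trancl_into_trancl)
  qed
qed

lemma path_distinct:
  assumes "acyclic E" "is_path E u t xs"
  shows "distinct xs"
proof -
  have st: "\<forall>i. Suc i < length xs \<longrightarrow> (xs ! i, xs ! Suc i) \<in> E" using assms(2) unfolding is_path_def by blast
  show ?thesis
  proof (subst distinct_conv_nth, intro allI impI)
    fix i j assume "i < length xs" "j < length xs" "i \<noteq> j"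
    show "xs ! i \<noteq> xs ! j"
    proof
      assume eq: "xs ! i = xs ! j"
      have "i < j \<or> j < i" using \<open>i \<noteq> j\<close> by arith
      then show False
      proof
        assume "i < j"
        then have "(xs ! i, xs ! j) \<in> E\<^sup>+" using path_trancl[OF st] \<open>j < length xs\<close> by blast
        then show False using eq assms(1) unfolding acyclic_def by metis
      next
        assume "j < i"
        then have "(xs ! j, xs ! i) \<in> E\<^sup>+" using path_trancl[OF st] \<open>i < length xs\<close> by blast
        then show False using eq assms(1) unfolding acyclic_def by metis
      qed
    qed
  qed
qed

lemma path_set:
  assumes "E \<subseteq> V \<times> V" "u \<in> V" "is_path E u t xs"
  shows "set xs \<subseteq> V"
proof
  fix x assume "x \<in> set xs"
  then obtain i where i: "i < length xs" "x = xs ! i" by (metis in_set_conv_nth)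
  show "x \<in> V"
  proof (cases i)
    case 0 then show ?thesis using assms i unfolding is_path_def by (metis hd_conv_nth)
  next
    case (Suc k)
    then have "(xs ! k, xs ! i) \<in> E" using assms(3) i unfolding is_path_def by blast
    then show ?thesis using assms(1) i by auto
  qed
qed

theorem claim6:
  fixes V :: "'a set" and E :: "('a \<times> 'a) set" and c :: "'a \<Rightarrow> 'a \<Rightarrow> real"
    and s t :: 'a and b b' :: real
    and Ss' Sp :: "'a \<Rightarrow> 'a" and Cs' Cp :: "'a \<Rightarrow> real"
  assumes "1 < b" and "b < b'"
    and "dag_instance V E c s t"
    and "soph_agent V E c t b' Ss' Cs'"
    and "pnaive_agent V E c t b Cs' Sp Cp"
  shows "Cp s \<le> b' * opt_cost E c t s"
proof -
  note D = assms(3)[unfolded dag_instance_def]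
  note S = assms(4)[unfolded soph_agent_def]
  note P = assms(5)[unfolded pnaive_agent_def]
  have finE: "finite E" using D by (meson finite_SigmaI finite_subset)
  have wf: "wf (E\<inverse>)" using finE D finite_acyclic_wf_converse by blast
  have EV: "\<And>u v. (u,v) \<in> E \<Longrightarrow> u \<in> V \<and> v \<in> V" using D by blast
  have cnn: "\<And>u v. (u,v) \<in> E \<Longrightarrow> 0 \<le> c u v" using D by blast
  have L1: "\<forall>u. u \<in> V \<longrightarrow> Cp u \<le> Cs' u"
  proof (rule allI, rule wf_induct[OF wf, of "\<lambda>u. u \<in> V \<longrightarrow> Cp u \<le> Cs' u"], intro impI)
    fix u assume IH: "\<forall>y. (y, u) \<in> E\<inverse> \<longrightarrow> y \<in> V \<longrightarrow> Cp y \<le> Cs' y" and uV: "u \<in> V"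
    show "Cp u \<le> Cs' u"
    proof (cases "u = t")
      case True then show ?thesis using S P by simp
    next
      case False
      then have u: "u \<in> V - {t}" using uV by blast
      define v where "v = Sp u"
      define w where "w = Ss' u"
      have ev: "(u,v) \<in> E" and ew: "(u,w) \<in> E" using S P u v_def w_def by auto
      have h1: "b * c u v + Cs' v \<le> b * c u w + Cs' w" using P u ev ew v_def by blast
      have h2: "b' * c u w + Cs' w \<le> b' * c u v + Cs' v" using S u ev w_def by blast
      have cp: "Cp u = c u v + Cp v" using P u v_def by blast
      have cs: "Cs' u = c u w + Cs' w" using S u w_def by blast
      have iv: "Cp v \<le> Cs' v" using IH ev EV by blast
      have "c u w \<le> c u v"
      proof -
        have "(b' - b) * (c u v - c u w) \<ge> 0" using h1 h2 by (simp add: algebra_simps)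
        then show ?thesis using assms(2) by (simp add: zero_le_mult_iff)
      qed
      then have "1 * (c u v - c u w) \<le> b * (c u v - c u w)" using assms(1)
        by (intro mult_right_mono) auto
      then have "c u v + Cs' v \<le> c u w + Cs' w" using h1 by (simp add: algebra_simps)
      then show ?thesis using cp cs iv by linarith
    qed
  qed
  have L2: "\<And>xs u. is_path E u t xs \<Longrightarrow> u \<in> V \<Longrightarrow> Cs' u \<le> b' * path_cost c xs"
  proof -
    fix xs
    show "\<And>u. is_path E u t xs \<Longrightarrow> u \<in> V \<Longrightarrow> Cs' u \<le> b' * path_cost c xs"
    proof (induction xs rule: induct_list012)
      case 1 then show ?case by (simp add: is_path_def)
    next
      case (2 x) then show ?case using path_single[OF "2.prems"(1)] S by (simp add: path_cost_def)
    next
      case (3 x v ys)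
      from path_cons2[OF "3.prems"(1)] have xu: "x = u" and uv: "(u,v) \<in> E" and pv: "is_path E v t (v # ys)" by auto
      have vV: "v \<in> V" using EV uv by blast
      have ut: "u \<noteq> t" using D uv "3.prems"(2) by blast
      then have u: "u \<in> V - {t}" using "3.prems"(2) by blast
      define w where "w = Ss' u"
      have ew: "(u,w) \<in> E" using S u w_def by auto
      have cs: "Cs' u = c u w + Cs' w" using S u w_def by blast
      have h2: "b' * c u w + Cs' w \<le> b' * c u v + Cs' v" using S u uv w_def by blast
      have "1 * c u w \<le> b' * c u w" using cnn[OF ew] assms(1,2)
        by (intro mult_right_mono) auto
      moreover have "Cs' v \<le> b' * path_cost c (v # ys)" using "3.IH"(2)[OF pv vV] .
      moreover have "c u v \<ge> 0" using cnn[OF uv] .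
      ultimately have "Cs' u \<le> b' * c u v + b' * path_cost c (v # ys)" using cs h2 by linarith
      then show ?case using xu by (simp add: path_cost_cons2 algebra_simps)
    qed
  qed
  have ex: "\<forall>u. u \<in> V \<longrightarrow> (\<exists>xs. is_path E u t xs)"
  proof (rule allI, rule wf_induct[OF wf, of "\<lambda>u. u \<in> V \<longrightarrow> (\<exists>xs. is_path E u t xs)"], intro impI)
    fix u assume IH: "\<forall>y. (y, u) \<in> E\<inverse> \<longrightarrow> y \<in> V \<longrightarrow> (\<exists>xs. is_path E y t xs)" and uV: "u \<in> V"
    show "\<exists>xs. is_path E u t xs"
    proof (cases "u = t")
      case True then have "is_path E u t [u]" by (simp add: is_path_def)
      then show ?thesis by blast
    next
      case False
      then obtain v where uv: "(u,v) \<in> E" using D uV by blast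
      then obtain xs where xs: "is_path E v t xs" using IH EV by blast
      have "is_path E u t (u # xs)"
        unfolding is_path_def
      proof (intro conjI allI impI)
        show "last (u # xs) = t" using xs by (simp add: is_path_def)
      next
        fix i assume i: "Suc i < length (u # xs)"
        show "((u # xs) ! i, (u # xs) ! Suc i) \<in> E"
        proof (cases i)
          case 0
          have "xs ! 0 = v" using xs unfolding is_path_def by (metis hd_conv_nth)
          then show ?thesis using uv 0 by simp
        next
          case (Suc k) then show ?thesis using xs i by (simp add: is_path_def)
        qed
      qed simp_all
      then show ?thesis by blast
    qed
  qed
  have sV: "s \<in> V" using D by blast
  define A where "A = {path_cost c xs | xs. is_path E s t xs}"
  have sub: "{xs. is_path E s t xs} \<subseteq> {xs. set xs \<subseteq> V \<and> distinct xs}"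
  proof
    fix xs assume "xs \<in> {xs. is_path E s t xs}"
    then have p: "is_path E s t xs" by simp
    have "set xs \<subseteq> V" using path_set[of E V s t xs] D sV p by blast
    moreover have "distinct xs" using path_distinct[of E s t xs] D p by blast
    ultimately show "xs \<in> {xs. set xs \<subseteq> V \<and> distinct xs}" by simp
  qed
  have "finite {xs. set xs \<subseteq> V \<and> distinct xs}" using finite_subset_distinct D by blast
  then have "finite {xs. is_path E s t xs}" using sub finite_subset by blast
  then have finA: "finite A" unfolding A_def by (simp add: setcompr_eq_image)
  obtain xs0 where "is_path E s t xs0" using ex sV by blast
  then have neA: "A \<noteq> {}" unfolding A_def by blast
  have "Min A \<in> A" using finA neA by (rule Min_in)
  then have "opt_cost E c t s \<in> A" unfolding opt_cost_def A_def by simp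
  then obtain xs where xs: "is_path E s t xs" "opt_cost E c t s = path_cost c xs" unfolding A_def by blast
  have "Cp s \<le> Cs' s" using L1 sV by blast
  also have "\<dots> \<le> b' * path_cost c xs" using L2[OF xs(1) sV] .
  finally show ?thesis using xs(2) by simp
qed

end
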